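(* Suppose the adversary's distribution $\mathcal D_t$ of $s_t=(x_t,y_t)$ at round $t$ (given the history $s_{1:t-1}$) has $\sigma$-smooth $x$-marginal. Then for algorithm $\mathscr Q^{\mathrm{FTPL}}$ with parameter $n$, $$\chi^2\big(\mathbb E_{s_t\sim\mathcal D_t}[\mathcal Q_{t+1}],\mathcal Q_t\big)\le\frac{2}{\sigma n}.$$
   Context: $\mathcal X$ is a finite set with uniform base measure; a distribution $\mathcal D$ on $\mathcal X$ is $\sigma$-smooth if $\mathcal D(x)\le\frac{1}{\sigma|\mathcal X|}$ for all $x$. Algorithm $\mathscr Q^{\mathrm{FTPL}}$ for a class $\mathcal F\subseteq\{\mathcal X\to[0,1]\}$ with parameters $n,\alpha$: at each round $t$, draw $N^{(t)}\sim\mathrm{Poi}(n)$ and fresh i.i.d. hallucinated samples uniform on $\mathcal X\times\{0,1\}$; set $\tilde h_t=\mathrm{OPT}(\text{hallucinated samples}\cup\{s_\tau\}_{\tau<t})$, where $\mathrm{OPT}$ returns an empirical log-loss minimizer over $\mathcal F$ as a deterministic function of the data multiset; the learner's hypothesis is $h_t=\frac{\tilde h_t+\alpha}{1+2\alpha}$. $\mathcal Q_t$ is the distribution of $h_t$ given $s_{1:t-1}$, $\mathcal Q_{t+1}$ the distribution of $h_{t+1}$ given $s_{1:t}$, and $\mathbb E_{s_t\sim\mathcal D_t}[\mathcal Q_{t+1}]$ the mixture over $s_t$. $\chi^2(P,Q)=\mathbb E_Q[(dP/dQ-1)^2]$. *)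

theory Defs
  imports "HOL-Probability.Probability" "HOL-Library.Multiset"
begin

definition neg_log :: "real \<Rightarrow> ereal" where
  "neg_log p = (if p \<le> 0 then \<infinity> else ereal (- ln p))"

definition log_loss :: "('x \<Rightarrow> real) \<Rightarrow> 'x \<times> bool \<Rightarrow> ereal" where
  "log_loss h s = (if snd s then neg_log (h (fst s)) else neg_log (1 - h (fst s)))"

definition emp_log_loss :: "('x \<Rightarrow> real) \<Rightarrow> ('x \<times> bool) multiset \<Rightarrow> ereal" where
  "emp_log_loss h S = sum_mset (image_mset (log_loss h) S)"

definition is_OPT :: "('x \<Rightarrow> real) set \<Rightarrow> (('x \<times> bool) multiset \<Rightarrow> ('x \<Rightarrow> real)) \<Rightarrow> bool" where
  "is_OPT F OPT \<longleftrightarrow> (\<forall>S. OPT S \<in> F \<and> (\<forall>f\<in>F. emp_log_loss (OPT S) S \<le> emp_log_loss f S))"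

definition hallucinated :: "real \<Rightarrow> ('x::finite \<times> bool) multiset pmf" where
  "hallucinated n = bind_pmf (poisson_pmf n) (\<lambda>N. map_pmf mset (replicate_pmf N (pmf_of_set UNIV)))"

definition ftpl_dist ::
  "(('x::finite \<times> bool) multiset \<Rightarrow> ('x \<Rightarrow> real)) \<Rightarrow> real \<Rightarrow> real \<Rightarrow> ('x \<times> bool) list \<Rightarrow> ('x \<Rightarrow> real) pmf" where
  "ftpl_dist OPT alpha n hist =
     map_pmf (\<lambda>H. (\<lambda>x. (OPT (H + mset hist) x + alpha) / (1 + 2 * alpha))) (hallucinated n)"

definition chi2 :: "'a pmf \<Rightarrow> 'a pmf \<Rightarrow> ennreal" where
  "chi2 P Q = (if set_pmf P \<subseteq> set_pmf Q
     then \<integral>\<^sup>+ h. ennreal ((pmf P h / pmf Q h - 1)^2) \<partial>(measure_pmf Q)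
     else \<top>)"

definition sigma_smooth :: "real \<Rightarrow> ('x::finite) pmf \<Rightarrow> bool" where
  "sigma_smooth \<sigma> D \<longleftrightarrow> (\<forall>x. pmf D x \<le> 1 / (\<sigma> * real CARD('x)))"

end

theory Submission
  imports Defs "HOL-Combinatorics.Multiset_Permutations"
begin


lemma pmf_rep:
  fixes xs :: "'a::finite list"
  shows "pmf (replicate_pmf N (pmf_of_set UNIV)) xs =
           (if length xs = N then (1 / real CARD('a)) ^ N else 0)"
proof (induction N arbitrary: xs)
  case 0
  then show ?case by (auto simp: pmf_return)
next
  case (Suc N)
  have eq: "replicate_pmf (Suc N) (pmf_of_set (UNIV::'a set)) =
     map_pmf (\<lambda>(x,ys). x # ys) (pair_pmf (pmf_of_set UNIV) (replicate_pmf N (pmf_of_set UNIV)))"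
    by (simp add: pair_pmf_def map_bind_pmf bind_return_pmf map_pmf_def bind_assoc_pmf)
  show ?case
  proof (cases xs)
    case Nil
    then show ?thesis
      unfolding eq Nil by (subst pmf_map_outside) auto
  next
    case (Cons y ys)
    have inj: "inj (\<lambda>(x::'a,ys). x # ys)" by (auto simp: inj_def)
    have "pmf (replicate_pmf (Suc N) (pmf_of_set (UNIV::'a set))) xs
        = pmf (pair_pmf (pmf_of_set UNIV) (replicate_pmf N (pmf_of_set UNIV))) (y, ys)"
      unfolding eq Cons using pmf_map_inj'[OF inj, of _ "(y,ys)"] by simp
    also have "\<dots> = (1 / real CARD('a)) * pmf (replicate_pmf N (pmf_of_set UNIV)) ys"
      by (simp add: pmf_pair)
    finally show ?thesis using Suc by (simp add: Cons)
  qed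
qed

lemma pmf_mset_rep:
  fixes M :: "'a::finite multiset"
  shows "pmf (map_pmf mset (replicate_pmf N (pmf_of_set UNIV))) M =
           (if size M = N then real (card (permutations_of_multiset M)) * (1 / real CARD('a)) ^ N else 0)"
proof -
  have "pmf (map_pmf mset (replicate_pmf N (pmf_of_set UNIV))) M
      = measure_pmf.prob (replicate_pmf N (pmf_of_set UNIV)) (permutations_of_multiset M)"
    by (simp add: pmf_map permutations_of_multiset_def vimage_def)
  also have "\<dots> = (\<Sum>xs\<in>permutations_of_multiset M. pmf (replicate_pmf N (pmf_of_set UNIV)) xs)"
    by (simp add: measure_measure_pmf_finite)
  also have "\<dots> = (\<Sum>xs\<in>permutations_of_multiset M. (if size M = N then (1 / real CARD('a)) ^ N else 0))"
    by (intro sum.cong refl) (auto simp: pmf_rep length_finite_permutations_of_multiset)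
  finally show ?thesis by simp
qed

lemma pmf_hall:
  fixes M :: "('x::finite \<times> bool) multiset"
  assumes n: "0 < n"
  shows "pmf (hallucinated n) M = n ^ size M / fact (size M) * exp (-n) *
           (real (card (permutations_of_multiset M)) * (1 / real CARD('x \<times> bool)) ^ size M)"
proof -
  have "pmf (hallucinated n) M = measure_pmf.expectation (poisson_pmf n)
     (\<lambda>N. pmf (map_pmf mset (replicate_pmf N (pmf_of_set UNIV))) M)"
    unfolding hallucinated_def by (simp add: pmf_bind)
  also have "\<dots> = (\<Sum>N\<in>{size M}. pmf (map_pmf mset (replicate_pmf N (pmf_of_set UNIV))) M * pmf (poisson_pmf n) N)"
    by (rule integral_measure_pmf_real) (auto simp: pmf_mset_rep split: if_splits)
  also have "\<dots> = n ^ size M / fact (size M) * exp (-n) *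
           (real (card (permutations_of_multiset M)) * (1 / real CARD('x \<times> bool)) ^ size M)"
    using n by (simp add: pmf_mset_rep)
  finally show ?thesis .
qed

lemma hall_ratio:
  fixes M :: "('x::finite \<times> bool) multiset"
  assumes n: "0 < n"
  shows "pmf (hallucinated n) (add_mset z M) * real (count M z + 1) =
           n / real CARD('x \<times> bool) * pmf (hallucinated n) M"
proof -
  define K where "K = real CARD('x \<times> bool)"
  define c where "c = real (card (permutations_of_multiset M))"
  have K: "K > 0" unfolding K_def by simp
  have cc: "real (card (permutations_of_multiset (add_mset z M))) * real (count M z + 1) = (real (size M) + 1) * c"
    using card_permutations_of_multiset_insert_aux[of M z] unfolding c_def
    by (metis add_mset_add_single of_nat_1 of_nat_add of_nat_mult)
  have "pmf (hallucinated n) (add_mset z M) * real (count M z + 1) =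
     n ^ (size M + 1) / fact (size M + 1) * exp (-n) * (1 / K) ^ (size M + 1) *
       (real (card (permutations_of_multiset (add_mset z M))) * real (count M z + 1))"
    using n by (simp add: pmf_hall K_def)
  also have "\<dots> = n ^ (size M + 1) / fact (size M + 1) * exp (-n) * (1 / K) ^ (size M + 1) *
       ((real (size M) + 1) * c)" by (simp only: cc)
  also have "\<dots> = n / K * (n ^ size M / fact (size M) * exp (-n) * (c * (1 / K) ^ size M))"
  proof -
    have f: "(fact (size M + 1) :: real) = (real (size M) + 1) * fact (size M)"
      by (simp add: algebra_simps)
    have fp: "(fact (size M) :: real) > 0" by simp
    have gen: "\<And>a F e k p. p \<noteq> 0 \<Longrightarrow> F \<noteq> 0 \<Longrightarrow>
      a * n / (p * F) * e * (k * (1/K)) * (p * c) = n / K * (a / F * e * (c * k))"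
      using K by (simp add: field_simps)
    show ?thesis unfolding f power_add power_one_right
      by (rule gen) (use fp K in auto)
  qed
  also have "\<dots> = n / K * pmf (hallucinated n) M"
    using n by (simp add: pmf_hall K_def c_def)
  finally show ?thesis unfolding K_def .
qed

lemma pmf_shift:
  fixes M :: "('x::finite \<times> bool) multiset"
  assumes n: "0 < n"
  shows "pmf (map_pmf (add_mset s) (hallucinated n)) M =
     pmf (hallucinated n) M * real (count M s) / (n / real CARD('x \<times> bool))"
proof (cases "s \<in># M")
  case True
  define M' where "M' = M - {#s#}"
  have M: "M = add_mset s M'" using True unfolding M'_def by simp
  have inj: "inj (add_mset s)" by (auto simp: inj_def)
  have K: "real CARD('x \<times> bool) > 0" by simp
  have "pmf (map_pmf (add_mset s) (hallucinated n)) M = pmf (hallucinated n) M'"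
    unfolding M by (rule pmf_map_inj'[OF inj])
  moreover have "pmf (hallucinated n) M * real (count M' s + 1) = n / real CARD('x \<times> bool) * pmf (hallucinated n) M'"
    unfolding M by (rule hall_ratio[OF n])
  moreover have "count M s = count M' s + 1" unfolding M by simp
  ultimately show ?thesis using n K by (simp add: field_simps)
next
  case False
  then have "pmf (map_pmf (add_mset s) (hallucinated n)) M = 0"
    by (intro pmf_map_outside) auto
  then show ?thesis using False by (simp add: not_in_iff)
qed

lemma pmf_P0:
  fixes M :: "('x::finite \<times> bool) multiset" and D :: "('x \<times> bool) pmf"
  assumes n: "0 < n"
  shows "pmf (bind_pmf D (\<lambda>s. map_pmf (add_mset s) (hallucinated n))) M =
     pmf (hallucinated n) M * (\<Sum>s\<in>UNIV. pmf D s * real (count M s)) / (n / real CARD('x \<times> bool))"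
proof -
  have "pmf (bind_pmf D (\<lambda>s. map_pmf (add_mset s) (hallucinated n))) M =
     (\<Sum>s\<in>UNIV. pmf (map_pmf (add_mset s) (hallucinated n)) M * pmf D s)"
    unfolding pmf_bind by (rule integral_measure_pmf_real) auto
  also have "\<dots> = (\<Sum>s\<in>UNIV. pmf (hallucinated n) M * (pmf D s * real (count M s)) / (n / real CARD('x \<times> bool)))"
    by (intro sum.cong refl) (simp add: pmf_shift[OF n])
  also have "\<dots> = (\<Sum>s\<in>UNIV. pmf (hallucinated n) M * (pmf D s * real (count M s))) / (n / real CARD('x \<times> bool))"
    by (rule sum_divide_distrib[symmetric])
  finally show ?thesis by (simp only: sum_distrib_left)
qed



definition Ssum :: "'a pmf \<Rightarrow> 'a pmf \<Rightarrow> ennreal" where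
  "Ssum P Q = (\<integral>\<^sup>+ x. ennreal (pmf P x / pmf Q x) \<partial>measure_pmf P)"

lemma pmf_total: "(\<integral>\<^sup>+ x. ennreal (pmf P x) \<partial>count_space UNIV) = 1"
  by (simp add: nn_integral_pmf measure_pmf.emeasure_space_1[simplified])

lemma chi2_Ssum:
  assumes sub: "set_pmf P \<subseteq> set_pmf Q"
  shows "chi2 P Q + 2 = Ssum P Q + 1"
proof -
  have z: "pmf Q x = 0 \<Longrightarrow> pmf P x = 0" for x
    using sub by (auto simp: set_pmf_iff)
  have pw: "ennreal (pmf Q x) * ennreal ((pmf P x / pmf Q x - 1)^2) + 2 * ennreal (pmf P x)
      = ennreal (pmf P x) * ennreal (pmf P x / pmf Q x) + ennreal (pmf Q x)" for x
  proof -
    define p where "p = pmf P x"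
    define q where "q = pmf Q x"
    have p0: "p \<ge> 0" and q0: "q \<ge> 0" unfolding p_def q_def by auto
    have id: "q * (p / q - 1)^2 + 2 * p = p * (p / q) + q"
    proof (cases "q = 0")
      case True then have "p = 0" using z unfolding p_def q_def by auto
      then show ?thesis using True by simp
    next
      case False then show ?thesis by (simp add: field_simps power2_eq_square)
    qed
    have "ennreal q * ennreal ((p / q - 1)^2) + 2 * ennreal p = ennreal (q * (p / q - 1)^2 + 2 * p)"
      using p0 q0 by (simp add: ennreal_mult ennreal_plus)
    also have "\<dots> = ennreal (p * (p / q) + q)" by (simp only: id)
    also have "\<dots> = ennreal p * ennreal (p / q) + ennreal q"
      using p0 q0 by (metis ennreal_mult' ennreal_plus divide_nonneg_nonneg mult_nonneg_nonneg)
    finally show ?thesis unfolding p_def q_def .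
  qed
  have "chi2 P Q + 2 = (\<integral>\<^sup>+ x. ennreal (pmf Q x) * ennreal ((pmf P x / pmf Q x - 1)^2) \<partial>count_space UNIV)
      + 2 * (\<integral>\<^sup>+ x. ennreal (pmf P x) \<partial>count_space UNIV)"
    using sub by (simp add: chi2_def nn_integral_measure_pmf pmf_total)
  also have "\<dots> = (\<integral>\<^sup>+ x. ennreal (pmf Q x) * ennreal ((pmf P x / pmf Q x - 1)^2) + 2 * ennreal (pmf P x) \<partial>count_space UNIV)"
    by (simp add: nn_integral_add nn_integral_cmult)
  also have "\<dots> = (\<integral>\<^sup>+ x. ennreal (pmf P x) * ennreal (pmf P x / pmf Q x) + ennreal (pmf Q x) \<partial>count_space UNIV)"
    by (simp only: pw)
  also have "\<dots> = Ssum P Q + 1"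
    by (simp add: nn_integral_add Ssum_def nn_integral_measure_pmf pmf_total)
  finally show ?thesis .
qed

lemma SUP_min_ennreal:
  assumes "a \<ge> 0"
  shows "(SUP k::nat. ennreal (min a (real k))) = ennreal a"
proof (rule antisym)
  show "(SUP k::nat. ennreal (min a (real k))) \<le> ennreal a"
    by (rule SUP_least) (simp add: ennreal_leI)
  have "ennreal a = ennreal (min a (real (nat \<lceil>a\<rceil>)))"
    by (simp add: min_def) linarith
  also have "\<dots> \<le> (SUP k::nat. ennreal (min a (real k)))"
    by (rule SUP_upper) simp
  finally show "ennreal a \<le> (SUP k::nat. ennreal (min a (real k)))" .
qed

lemma Ssum_map:
  assumes sub: "set_pmf P \<subseteq> set_pmf Q"
  shows "Ssum (map_pmf g P) (map_pmf g Q) \<le> Ssum P Q"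
proof -
  define P' where "P' = map_pmf g P"
  define Q' where "Q' = map_pmf g Q"
  define t where "t y = pmf P' y / pmf Q' y" for y
  define tk where "tk k y = min (t y) (real k)" for k :: nat and y
  have t0: "t y \<ge> 0" for y unfolding t_def by simp
  have tk0: "tk k y \<ge> 0" for k y unfolding tk_def using t0 by simp
  have z: "pmf Q x = 0 \<Longrightarrow> pmf P x = 0" for x
    using sub by (auto simp: set_pmf_iff)
  have sub': "set_pmf P' \<subseteq> set_pmf Q'" unfolding P'_def Q'_def using sub by auto
  have z': "pmf Q' y = 0 \<Longrightarrow> pmf P' y = 0" for y
    using sub' by (auto simp: set_pmf_iff)
  define X where "X k = (\<integral>\<^sup>+ y. ennreal (tk k y) \<partial>measure_pmf P')" for k
  have Xk: "X k \<le> Ssum P Q" for k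
  proof -
    have pw: "ennreal (pmf P x) * ennreal (pmf P x / pmf Q x) + ennreal (pmf Q x) * ennreal ((tk k (g x))^2)
        \<ge> 2 * (ennreal (pmf P x) * ennreal (tk k (g x)))" for x
    proof -
      define p where "p = pmf P x"
      define q where "q = pmf Q x"
      define c where "c = tk k (g x)"
      have p0: "p \<ge> 0" and q0: "q \<ge> 0" and c0: "c \<ge> 0" unfolding p_def q_def c_def using tk0 by auto
      have ineq: "p * (p / q) + q * c^2 \<ge> 2 * (p * c)"
      proof (cases "q = 0")
        case True then have "p = 0" using z unfolding p_def q_def by auto
        then show ?thesis using True by simp
      next
        case False
        then have q1: "q > 0" using q0 by simp
        have "p * (p / q) + q * c^2 - 2 * (p * c) = (p - q * c)^2 / q"
          using q1 by (simp add: field_simps power2_eq_square)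
        also have "\<dots> \<ge> 0" using q1 by simp
        finally show ?thesis by simp
      qed
      have e1: "ennreal (2 * (p * c)) = 2 * (ennreal p * ennreal c)"
        using p0 c0 by (metis ennreal_mult ennreal_numeral mult_nonneg_nonneg zero_le_numeral)
      have e2: "ennreal (p * (p / q) + q * c^2) = ennreal p * ennreal (p / q) + ennreal q * ennreal (c^2)"
        using p0 q0 c0 by (metis ennreal_mult' ennreal_plus divide_nonneg_nonneg mult_nonneg_nonneg zero_le_power2)
      have "ennreal (2 * (p * c)) \<le> ennreal (p * (p / q) + q * c^2)"
        by (rule ennreal_leI[OF ineq])
      then show ?thesis unfolding p_def[symmetric] q_def[symmetric] c_def[symmetric] e1 e2 .
    qed
    have A: "(\<integral>\<^sup>+ x. ennreal ((tk k (g x))^2) \<partial>measure_pmf Q) \<le> X k"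
    proof -
      have "(\<integral>\<^sup>+ x. ennreal ((tk k (g x))^2) \<partial>measure_pmf Q) = (\<integral>\<^sup>+ y. ennreal ((tk k y)^2) \<partial>measure_pmf Q')"
        unfolding Q'_def by (simp add: nn_integral_map_pmf)
      also have "\<dots> \<le> (\<integral>\<^sup>+ y. ennreal (tk k y * t y) \<partial>measure_pmf Q')"
        by (intro nn_integral_mono ennreal_leI) (auto simp: tk_def power2_eq_square intro!: mult_left_mono t0)
      also have "\<dots> = (\<integral>\<^sup>+ y. ennreal (pmf Q' y) * ennreal (tk k y * t y) \<partial>count_space UNIV)"
        by (simp add: nn_integral_measure_pmf)
      also have "\<dots> = (\<integral>\<^sup>+ y. ennreal (pmf P' y) * ennreal (tk k y) \<partial>count_space UNIV)"
      proof (intro nn_integral_cong)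
        fix y
        have "pmf Q' y * (tk k y * t y) = pmf P' y * tk k y"
        proof (cases "pmf Q' y = 0")
          case True then show ?thesis using z' by simp
        next
          case False then show ?thesis by (simp add: t_def field_simps)
        qed
        then show "ennreal (pmf Q' y) * ennreal (tk k y * t y) = ennreal (pmf P' y) * ennreal (tk k y)"
          by (metis ennreal_mult'' pmf_nonneg tk0 mult_nonneg_nonneg t0)
      qed
      also have "\<dots> = X k" by (simp add: X_def nn_integral_measure_pmf)
      finally show ?thesis .
    qed
    have B: "(\<integral>\<^sup>+ x. ennreal (tk k (g x)) \<partial>measure_pmf P) = X k"
      unfolding X_def P'_def by (simp add: nn_integral_map_pmf)
    have "2 * X k = (\<integral>\<^sup>+ x. 2 * (ennreal (pmf P x) * ennreal (tk k (g x))) \<partial>count_space UNIV)"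
      by (simp add: nn_integral_cmult B[symmetric] nn_integral_measure_pmf)
    also have "\<dots> \<le> (\<integral>\<^sup>+ x. ennreal (pmf P x) * ennreal (pmf P x / pmf Q x) + ennreal (pmf Q x) * ennreal ((tk k (g x))^2) \<partial>count_space UNIV)"
      by (intro nn_integral_mono pw)
    also have "\<dots> = Ssum P Q + (\<integral>\<^sup>+ x. ennreal ((tk k (g x))^2) \<partial>measure_pmf Q)"
      by (simp add: nn_integral_add Ssum_def nn_integral_measure_pmf)
    also have "\<dots> \<le> Ssum P Q + X k" using A by (rule add_left_mono)
    finally have le0: "2 * X k \<le> Ssum P Q + X k" .
    have le: "X k + X k \<le> X k + Ssum P Q" using le0 by (simp only: mult_2 add.commute[of "Ssum P Q"])
    have "X k \<le> (\<integral>\<^sup>+ y. ennreal (real k) \<partial>measure_pmf P')"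
      unfolding X_def by (intro nn_integral_mono ennreal_leI) (simp add: tk_def)
    also have "\<dots> = ennreal (real k)" by (simp add: measure_pmf.emeasure_space_1)
    finally have fin: "X k \<noteq> \<infinity>" by (metis ennreal_neq_top infinity_ennreal_def neq_top_trans)
    show ?thesis using le fin by (simp add: ennreal_add_left_cancel_le)
  qed
  have "Ssum P' Q' = (\<integral>\<^sup>+ y. (SUP k. ennreal (tk k y)) \<partial>measure_pmf P')"
    unfolding Ssum_def tk_def by (simp add: SUP_min_ennreal t0 t_def[symmetric])
  also have "\<dots> = (SUP k. X k)" unfolding X_def
  proof (rule nn_integral_monotone_convergence_SUP)
    show "incseq (\<lambda>k y. ennreal (tk k y))"
      by (intro monoI le_funI ennreal_leI) (auto simp: tk_def)
  qed simp
  also have "\<dots> \<le> Ssum P Q" by (intro SUP_least Xk)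
  finally show ?thesis unfolding P'_def Q'_def .
qed



lemma E_count:
  fixes s :: "'x::finite \<times> bool"
  assumes n: "0 < n"
  shows "(\<integral>\<^sup>+ H. ennreal (real (count H s)) \<partial>measure_pmf (hallucinated n)) = ennreal (n / real CARD('x \<times> bool))"
proof -
  define lam where "lam = n / real CARD('x \<times> bool)"
  have lam: "lam > 0" unfolding lam_def using n by simp
  define E where "E = (\<integral>\<^sup>+ H. ennreal (real (count H s)) \<partial>measure_pmf (hallucinated n))"
  have pw: "ennreal (pmf (map_pmf (add_mset s) (hallucinated n)) M) * ennreal lam
      = ennreal (pmf (hallucinated n) M) * ennreal (real (count M s))" for M
  proof -
    have "pmf (map_pmf (add_mset s) (hallucinated n)) M * lam = pmf (hallucinated n) M * real (count M s)"
      using pmf_shift[OF n, of s M] lam n unfolding lam_def by simp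
    then show ?thesis using lam
      by (metis ennreal_mult pmf_nonneg of_nat_0_le_iff less_imp_le)
  qed
  have "ennreal lam = (\<integral>\<^sup>+ M. ennreal (pmf (map_pmf (add_mset s) (hallucinated n)) M) \<partial>count_space UNIV) * ennreal lam"
    by (simp add: pmf_total)
  also have "\<dots> = (\<integral>\<^sup>+ M. ennreal (pmf (map_pmf (add_mset s) (hallucinated n)) M) * ennreal lam \<partial>count_space UNIV)"
    by (simp add: nn_integral_multc)
  also have "\<dots> = E" unfolding E_def pw by (simp add: nn_integral_measure_pmf)
  finally have "E = ennreal lam" by simp
  then show ?thesis unfolding E_def lam_def .
qed

lemma E_count_P0:
  fixes s :: "'x::finite \<times> bool" and D :: "('x \<times> bool) pmf"
  assumes n: "0 < n"
  shows "(\<integral>\<^sup>+ M. ennreal (real (count M s)) \<partial>measure_pmf (bind_pmf D (\<lambda>s. map_pmf (add_mset s) (hallucinated n))))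
     = ennreal (n / real CARD('x \<times> bool) + pmf D s)"
proof -
  have "(\<integral>\<^sup>+ M. ennreal (real (count M s)) \<partial>measure_pmf (bind_pmf D (\<lambda>s. map_pmf (add_mset s) (hallucinated n))))
    = (\<integral>\<^sup>+ s'. (\<integral>\<^sup>+ H. ennreal (real (count H s)) + indicator {s} s' \<partial>measure_pmf (hallucinated n)) \<partial>measure_pmf D)"
  proof -
    have pw: "ennreal (real (count (add_mset s' H) s)) = ennreal (real (count H s)) + indicator {s} s'" for s' H
      by (cases "s' = s") (auto simp: ennreal_plus[symmetric])
    show ?thesis by (simp only: nn_integral_bind_pmf nn_integral_map_pmf pw)
  qed
  also have "\<dots> = (\<integral>\<^sup>+ s'. ennreal (n / real CARD('x \<times> bool)) + indicator {s} s' \<partial>measure_pmf D)"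
    by (simp add: nn_integral_add E_count[OF n] measure_pmf.emeasure_space_1)
  also have "\<dots> = ennreal (n / real CARD('x \<times> bool)) + ennreal (pmf D s)"
    by (simp add: nn_integral_add measure_pmf.emeasure_space_1 emeasure_pmf_single)
  also have "\<dots> = ennreal (n / real CARD('x \<times> bool) + pmf D s)"
    using n by (simp add: ennreal_plus)
  finally show ?thesis .
qed

lemma P0_sub:
  fixes D :: "('x::finite \<times> bool) pmf"
  assumes n: "0 < n"
  shows "set_pmf (bind_pmf D (\<lambda>s. map_pmf (add_mset s) (hallucinated n))) \<subseteq> set_pmf (hallucinated n)"
proof
  fix M assume "M \<in> set_pmf (bind_pmf D (\<lambda>s. map_pmf (add_mset s) (hallucinated n)))"
  then have "pmf (bind_pmf D (\<lambda>s. map_pmf (add_mset s) (hallucinated n))) M \<noteq> 0"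
    by (metis set_pmf_iff)
  then have "pmf (hallucinated n) M \<noteq> 0" by (simp add: pmf_P0[OF n])
  then show "M \<in> set_pmf (hallucinated n)" by (metis set_pmf_iff)
qed

lemma Ssum_P0:
  fixes D :: "('x::finite \<times> bool) pmf"
  assumes n: "0 < n"
  shows "Ssum (bind_pmf D (\<lambda>s. map_pmf (add_mset s) (hallucinated n))) (hallucinated n)
     = ennreal (1 + (\<Sum>s\<in>UNIV. (pmf D s)^2) / (n / real CARD('x \<times> bool)))"
proof -
  define lam where "lam = n / real CARD('x \<times> bool)"
  have lam: "lam > 0" unfolding lam_def using n by simp
  define P0 where "P0 = bind_pmf D (\<lambda>s. map_pmf (add_mset s) (hallucinated n))"
  have "Ssum P0 (hallucinated n) = (\<integral>\<^sup>+ M. (\<Sum>s\<in>UNIV. ennreal (pmf D s / lam) * ennreal (real (count M s))) \<partial>measure_pmf P0)"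
    unfolding Ssum_def
  proof (rule nn_integral_cong_AE, rule AE_pmfI)
    fix M assume M: "M \<in> set_pmf P0"
    then have "M \<in> set_pmf (hallucinated n)"
      using P0_sub[OF n, of D] unfolding P0_def by blast
    then have "pmf (hallucinated n) M \<noteq> 0" by (metis set_pmf_iff)
    then have "pmf P0 M / pmf (hallucinated n) M = (\<Sum>s\<in>UNIV. pmf D s / lam * real (count M s))"
      unfolding P0_def pmf_P0[OF n] lam_def[symmetric] by (simp add: sum_divide_distrib)
    then show "ennreal (pmf P0 M / pmf (hallucinated n) M) = (\<Sum>s\<in>UNIV. ennreal (pmf D s / lam) * ennreal (real (count M s)))"
    proof -
      have "ennreal (\<Sum>s\<in>UNIV. pmf D s / lam * real (count M s)) = (\<Sum>s\<in>UNIV. ennreal (pmf D s / lam * real (count M s)))"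
        by (rule sum_ennreal[symmetric]) (use lam in simp)
      also have "\<dots> = (\<Sum>s\<in>UNIV. ennreal (pmf D s / lam) * ennreal (real (count M s)))"
        by (intro sum.cong refl ennreal_mult'') simp
      finally show ?thesis using \<open>pmf P0 M / pmf (hallucinated n) M = _\<close> by simp
    qed
  qed
  also have "\<dots> = (\<Sum>s\<in>UNIV. ennreal (pmf D s / lam) * (\<integral>\<^sup>+ M. ennreal (real (count M s)) \<partial>measure_pmf P0))"
    by (simp add: nn_integral_sum nn_integral_cmult)
  also have "\<dots> = (\<Sum>s\<in>UNIV. ennreal (pmf D s / lam) * ennreal (lam + pmf D s))"
    unfolding P0_def E_count_P0[OF n] lam_def ..
  also have "\<dots> = ennreal (\<Sum>s\<in>UNIV. pmf D s / lam * (lam + pmf D s))"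
  proof -
    have "(\<Sum>s\<in>UNIV. ennreal (pmf D s / lam) * ennreal (lam + pmf D s)) = (\<Sum>s\<in>UNIV. ennreal (pmf D s / lam * (lam + pmf D s)))"
      by (intro sum.cong refl ennreal_mult''[symmetric]) (use lam in simp)
    also have "\<dots> = ennreal (\<Sum>s\<in>UNIV. pmf D s / lam * (lam + pmf D s))"
      by (rule sum_ennreal) (use lam in simp)
    finally show ?thesis .
  qed
  also have "(\<Sum>s\<in>UNIV. pmf D s / lam * (lam + pmf D s)) = (\<Sum>s\<in>UNIV. pmf D s) + (\<Sum>s\<in>UNIV. (pmf D s)^2) / lam"
  proof -
    have "(\<Sum>s\<in>UNIV. pmf D s / lam * (lam + pmf D s)) = (\<Sum>s\<in>UNIV. pmf D s + (pmf D s)^2 / lam)"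
      by (intro sum.cong refl) (use lam in \<open>simp add: field_simps power2_eq_square\<close>)
    also have "\<dots> = (\<Sum>s\<in>UNIV. pmf D s) + (\<Sum>s\<in>UNIV. (pmf D s)^2) / lam"
      by (simp only: sum.distrib sum_divide_distrib)
    finally show ?thesis .
  qed
  also have "(\<Sum>s\<in>UNIV. pmf D s) = 1" by (rule sum_pmf_eq_1) auto
  finally show ?thesis unfolding P0_def lam_def .
qed



lemma sq_bound:
  fixes D :: "('x::finite \<times> bool) pmf"
  assumes sigma_pos: "0 < \<sigma>" and smooth: "sigma_smooth \<sigma> (map_pmf fst D)"
  shows "(\<Sum>s\<in>UNIV. (pmf D s)^2) \<le> 1 / (\<sigma> * real CARD('x))"
proof -
  define m where "m = 1 / (\<sigma> * real CARD('x))"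
  have le: "pmf D s \<le> m" for s
  proof -
    have "pmf D s = measure_pmf.prob D {s}" by (simp add: measure_pmf_single)
    also have "\<dots> \<le> measure_pmf.prob D (fst -` {fst s})"
      by (rule measure_pmf.finite_measure_mono) auto
    also have "\<dots> = pmf (map_pmf fst D) (fst s)" by (simp add: pmf_map)
    also have "\<dots> \<le> m" using smooth unfolding sigma_smooth_def m_def by blast
    finally show ?thesis .
  qed
  have "(\<Sum>s\<in>UNIV. (pmf D s)^2) \<le> (\<Sum>s\<in>UNIV. pmf D s * m)"
    by (intro sum_mono) (simp add: power2_eq_square le mult_left_mono)
  also have "\<dots> = (\<Sum>s\<in>UNIV. pmf D s) * m" by (simp add: sum_distrib_right)
  also have "(\<Sum>s\<in>UNIV. pmf D s) = 1" by (rule sum_pmf_eq_1) auto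
  finally show ?thesis unfolding m_def by simp
qed

theorem lemma4p5:
  fixes F :: "('x::finite \<Rightarrow> real) set"
    and OPT :: "('x \<times> bool) multiset \<Rightarrow> ('x \<Rightarrow> real)"
    and D :: "('x \<times> bool) pmf"
    and hist :: "('x \<times> bool) list"
    and \<sigma> n alpha :: real
  assumes F_range: "\<forall>f\<in>F. \<forall>x. 0 \<le> f x \<and> f x \<le> 1"
    and OPT: "is_OPT F OPT"
    and sigma_pos: "0 < \<sigma>"
    and n_pos: "0 < n"
    and alpha_nonneg: "0 \<le> alpha"
    and smooth: "sigma_smooth \<sigma> (map_pmf fst D)"
  shows "chi2 (bind_pmf D (\<lambda>s. ftpl_dist OPT alpha n (hist @ [s])))
              (ftpl_dist OPT alpha n hist)
         \<le> ennreal (2 / (\<sigma> * n))"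
proof -
  define G where "G H = (\<lambda>x. (OPT (H + mset hist) x + alpha) / (1 + 2 * alpha))" for H
  define P0 where "P0 = bind_pmf D (\<lambda>s. map_pmf (add_mset s) (hallucinated n))"
  define Hn where "Hn = (hallucinated n :: ('x \<times> bool) multiset pmf)"
  have eqQ: "ftpl_dist OPT alpha n hist = map_pmf G Hn"
    unfolding ftpl_dist_def G_def Hn_def ..
  have eqP: "bind_pmf D (\<lambda>s. ftpl_dist OPT alpha n (hist @ [s])) = map_pmf G P0"
    unfolding P0_def map_bind_pmf map_pmf_comp ftpl_dist_def G_def
    by (intro bind_pmf_cong refl map_pmf_cong) (simp_all add: add.assoc add.commute add.left_commute)
  have sub: "set_pmf P0 \<subseteq> set_pmf Hn" unfolding P0_def Hn_def by (rule P0_sub[OF n_pos])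
  have sub': "set_pmf (map_pmf G P0) \<subseteq> set_pmf (map_pmf G Hn)" using sub by auto
  define v where "v = (\<Sum>s\<in>UNIV. (pmf D s)^2) / (n / real CARD('x \<times> bool))"
  have v: "v \<le> 2 / (\<sigma> * n)"
  proof -
    have "v = (\<Sum>s\<in>UNIV. (pmf D s)^2) * (2 * real CARD('x)) / n"
      unfolding v_def by simp
    also have "\<dots> \<le> 1 / (\<sigma> * real CARD('x)) * (2 * real CARD('x)) / n"
      by (intro divide_right_mono mult_right_mono sq_bound[OF sigma_pos smooth]) (use n_pos in auto)
    also have "\<dots> = 2 / (\<sigma> * n)" using sigma_pos by simp
    finally show ?thesis .
  qed
  have "chi2 (map_pmf G P0) (map_pmf G Hn) + 2 = Ssum (map_pmf G P0) (map_pmf G Hn) + 1"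
    by (rule chi2_Ssum[OF sub'])
  also have "\<dots> \<le> Ssum P0 Hn + 1" by (intro add_right_mono Ssum_map[OF sub])
  also have "Ssum P0 Hn = ennreal (1 + v)" unfolding P0_def Hn_def v_def by (rule Ssum_P0[OF n_pos])
  also have "ennreal (1 + v) + 1 \<le> 2 + ennreal (2 / (\<sigma> * n))"
  proof -
    have v0: "v \<ge> 0" unfolding v_def using n_pos by (intro divide_nonneg_nonneg sum_nonneg) auto
    have "ennreal (1 + v) + 1 = ennreal (2 + v)" using v0 by (simp add: ennreal_plus[symmetric])
    also have "\<dots> \<le> ennreal (2 + 2 / (\<sigma> * n))" using v by (intro ennreal_leI) simp
    also have "\<dots> = 2 + ennreal (2 / (\<sigma> * n))" using sigma_pos n_pos by (simp add: ennreal_plus)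
    finally show ?thesis .
  qed
  finally have "2 + chi2 (map_pmf G P0) (map_pmf G Hn) \<le> 2 + ennreal (2 / (\<sigma> * n))"
    by (simp add: add.commute)
  then have "chi2 (map_pmf G P0) (map_pmf G Hn) \<le> ennreal (2 / (\<sigma> * n))"
    by (simp add: ennreal_add_left_cancel_le)
  then show ?thesis unfolding eqP eqQ .
qed

end
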